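(* Let $m\ge 1$ and $1\le t\le 2^{m-1}$ be integers and let $p=t/2^m$ (so $0<p\le 1/2$). Let $f:\{0,1\}^n\to\mathbb{R}$ and let $g=\mathrm{Red}(f):\{0,1\}^{mn}\to\mathbb{R}$ be the reduced function defined below. Then for every $1\le d\le n$, \[ \sum_{S\subseteq\{1,\dots,mn\},\,|S|=d}\hat g(S)^2\;\ge\;\Big(\frac{p\lfloor \log(1/p)\rfloor}{1-p}\Big)^d\sum_{S\subseteq\{1,\dots,n\},\,|S|=d}\hat f(S)^2, \] where the Fourier–Walsh coefficients of $g$ are taken with respect to the uniform measure $\mu_{1/2}$ on $\{0,1\}^{mn}$ and those of $f$ with respect to $\mu_p$ on $\{0,1\}^n$.
   Context: For $0<p<1$, $\mu_p$ denotes the product measure on $\{0,1\}^n$ given by $\mu_p(x)=p^{\sum_i x_i}(1-p)^{n-\sum_i x_i}$; $\mu_{1/2}$ is the uniform measure. Elements of $\{0,1\}^n$ are identified with subsets of $\{1,\dots,n\}$ in the natural way. For $S,T\subseteq\{1,\dots,n\}$ let $u_S(T)=\big(-\sqrt{(1-p)/p}\big)^{|S\cap T|}\big(\sqrt{p/(1-p)}\big)^{|S\setminus T|}$ (for $p=1/2$, $u_S(T)=(-1)^{|S\cap T|}$). The $u_S$ form an orthonormal basis of $L^2(\mu_p)$, and every $f$ has a unique expansion $f=\sum_S\hat f(S)u_S$ with $\hat f(S)=\mathbb{E}_{\mu_p}[f u_S]$ (the Fourier–Walsh coefficients w.r.t. $\mu_p$). Reduction: write $y\in\{0,1\}^{mn}$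 as $y=(y^1,\dots,y^n)$ with $y^i=(y^i_1,\dots,y^i_m)\in\{0,1\}^m$, where $y^i_j$ is the coordinate $(i-1)m+j$ of $y$. Let $\mathrm{Bin}(y^i)=\sum_{j=0}^{m-1}2^j y^i_{m-j}\in\{0,\dots,2^m-1\}$, and $h:\{0,1\}^m\to\{0,1\}$, $h(y^i)=1$ if $\mathrm{Bin}(y^i)\ge 2^m-t$ and $h(y^i)=0$ otherwise. Then $\mathrm{Red}(f)=g$ is defined by $g(y)=f(h(y^1),\dots,h(y^n))$. Here $\log$ denotes the base-2 logarithm. *)

theory Defs
  imports Complex_Main
begin

text \<open>Points of the cube {0,1}^n are identified with subsets of {1..n}.\<close>

definition mu :: "nat \<Rightarrow> real \<Rightarrow> nat set \<Rightarrow> real" where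
  "mu n p T = p ^ card T * (1 - p) ^ (n - card T)"

definition u :: "real \<Rightarrow> nat set \<Rightarrow> nat set \<Rightarrow> real" where
  "u p S T = (- sqrt ((1 - p) / p)) ^ card (S \<inter> T) * (sqrt (p / (1 - p))) ^ card (S - T)"

definition fcoef :: "nat \<Rightarrow> real \<Rightarrow> (nat set \<Rightarrow> real) \<Rightarrow> nat set \<Rightarrow> real" where
  "fcoef n p f S = (\<Sum>T\<in>Pow {1..n}. mu n p T * f T * u p S T)"

text \<open>Coordinate y^i_j of y (as a subset of {1..mn}) is coordinate (i-1)m+j.\<close>
definition blk :: "nat \<Rightarrow> nat set \<Rightarrow> nat \<Rightarrow> nat \<Rightarrow> nat" where
  "blk m Y i j = (if (i - 1) * m + j \<in> Y then 1 else 0)"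

definition Bin :: "nat \<Rightarrow> nat set \<Rightarrow> nat \<Rightarrow> nat" where
  "Bin m Y i = (\<Sum>j=0..<m. 2 ^ j * blk m Y i (m - j))"

definition hfun :: "nat \<Rightarrow> nat \<Rightarrow> nat set \<Rightarrow> nat \<Rightarrow> bool" where
  "hfun m t Y i \<longleftrightarrow> Bin m Y i \<ge> 2 ^ m - t"

definition Red :: "nat \<Rightarrow> nat \<Rightarrow> nat \<Rightarrow> (nat set \<Rightarrow> real) \<Rightarrow> nat set \<Rightarrow> real" where
  "Red n m t f Y = f {i \<in> {1..n}. hfun m t Y i}"

end

theory Submission imports Defs "HOL-Library.Nat_Bijection" "HOL-Library.FuncSet" begin



lemma sum_Pow_prod_blocks:
  fixes B :: "'i \<Rightarrow> 'a set" and \<psi> :: "'i \<Rightarrow> 'a set \<Rightarrow> real"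
  assumes "finite I" "\<And>i. i\<in>I \<Longrightarrow> finite (B i)"
    "\<And>i j. i\<in>I \<Longrightarrow> j\<in>I \<Longrightarrow> i\<noteq>j \<Longrightarrow> B i \<inter> B j = {}"
  shows "(\<Sum>Y\<in>Pow (\<Union>i\<in>I. B i). \<Prod>i\<in>I. \<psi> i (Y \<inter> B i)) = (\<Prod>i\<in>I. \<Sum>Z\<in>Pow (B i). \<psi> i Z)"
  using assms
proof (induction I rule: finite_induct)
  case empty
  then show ?case by simp
next
  case (insert a I)
  define R where "R = (\<Union>i\<in>I. B i)"
  have U: "(\<Union>i\<in>insert a I. B i) = B a \<union> R" by (simp add: R_def)
  have disj: "B a \<inter> R = {}" using insert by (auto simp: R_def)
  have finR: "finite R" using insert by (auto simp: R_def)
  have finA: "finite (B a)" using insert by auto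
  have PU: "Pow (B a \<union> R) = (\<lambda>(Z,W). Z \<union> W) ` (Pow (B a) \<times> Pow R)"
  proof
    show "Pow (B a \<union> R) \<subseteq> (\<lambda>(Z,W). Z \<union> W) ` (Pow (B a) \<times> Pow R)"
    proof
      fix Y assume "Y \<in> Pow (B a \<union> R)"
      then have "Y = (\<lambda>(Z,W). Z \<union> W) (Y \<inter> B a, Y \<inter> R)" by auto
      moreover have "(Y \<inter> B a, Y \<inter> R) \<in> Pow (B a) \<times> Pow R" by auto
      ultimately show "Y \<in> (\<lambda>(Z,W). Z \<union> W) ` (Pow (B a) \<times> Pow R)" by blast
    qed
  qed auto
  have inj: "inj_on (\<lambda>(Z,W). Z \<union> W) (Pow (B a) \<times> Pow R)"
  proof (rule inj_onI, clarify)
    fix Z W Z' W' assume h: "Z \<subseteq> B a" "W \<subseteq> R" "Z' \<subseteq> B a" "W' \<subseteq> R" "Z \<union> W = Z' \<union> W'"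
    have "Z = (Z \<union> W) \<inter> B a" "Z' = (Z' \<union> W') \<inter> B a" "W = (Z \<union> W) \<inter> R" "W' = (Z' \<union> W') \<inter> R"
      using h disj by auto
    then show "Z = Z' \<and> W = W'" using h(5) by metis
  qed
  have key: "(\<Prod>i\<in>insert a I. \<psi> i ((Z \<union> W) \<inter> B i)) = \<psi> a Z * (\<Prod>i\<in>I. \<psi> i (W \<inter> B i))"
    if "Z \<subseteq> B a" "W \<subseteq> R" for Z W
  proof -
    have "(Z \<union> W) \<inter> B a = Z" using that disj by auto
    moreover have "(Z \<union> W) \<inter> B i = W \<inter> B i" if "i \<in> I" for i
    proof -
      have "B a \<inter> B i = {}" using insert that by auto
      then show ?thesis using \<open>Z \<subseteq> B a\<close> by auto
    qed
    ultimately show ?thesis using insert by (simp add: prod.insert)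
  qed
  have "(\<Sum>Y\<in>Pow (\<Union>i\<in>insert a I. B i). \<Prod>i\<in>insert a I. \<psi> i (Y \<inter> B i))
      = (\<Sum>ZW\<in>Pow (B a) \<times> Pow R. \<Prod>i\<in>insert a I. \<psi> i ((\<lambda>(Z,W). Z \<union> W) ZW \<inter> B i))"
    unfolding U PU by (rule sum.reindex[OF inj, unfolded comp_def])
  also have "\<dots> = (\<Sum>ZW\<in>Pow (B a) \<times> Pow R. \<psi> a (fst ZW) * (\<Prod>i\<in>I. \<psi> i (snd ZW \<inter> B i)))"
    by (rule sum.cong) (auto simp: key)
  also have "\<dots> = (\<Sum>Z\<in>Pow (B a). \<psi> a Z) * (\<Sum>W\<in>Pow R. \<Prod>i\<in>I. \<psi> i (W \<inter> B i))"
    by (simp add: sum_product sum.cartesian_product split_beta)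
  also have "(\<Sum>W\<in>Pow R. \<Prod>i\<in>I. \<psi> i (W \<inter> B i)) = (\<Prod>i\<in>I. \<Sum>Z\<in>Pow (B i). \<psi> i Z)"
    unfolding R_def using insert by (intro insert(3)) auto
  finally show ?case using insert by (simp add: prod.insert)
qed




lemma Bin_enc: "Bin m Z i = set_encode {j\<in>{..<m}. (i-1)*m + (m-j) \<in> Z}"
proof -
  have "Bin m Z i = (\<Sum>j\<in>{..<m}. if (i-1)*m + (m-j) \<in> Z then 2^j else 0)"
    unfolding Bin_def blk_def lessThan_atLeast0 by (intro sum.cong) auto
  also have "\<dots> = (\<Sum>j\<in>{j\<in>{..<m}. (i-1)*m + (m-j) \<in> Z}. 2^j)"
    by (rule sum.inter_filter[symmetric]) simp
  finally show ?thesis by (simp add: set_encode_def)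
qed

lemma hfun_local: "hfun m t Z i = hfun m t (Z \<inter> {(i-1)*m+1..(i-1)*m+m}) i"
proof -
  have "{j\<in>{..<m}. (i-1)*m + (m-j) \<in> Z} = {j\<in>{..<m}. (i-1)*m + (m-j) \<in> Z \<inter> {(i-1)*m+1..(i-1)*m+m}}"
    by auto
  then show ?thesis unfolding hfun_def Bin_enc by simp
qed

lemma set_encode_le: "A \<subseteq> {..<m} \<Longrightarrow> set_encode A \<le> set_encode {..<m}"
  unfolding set_encode_def by (rule sum_mono2) auto

lemma set_encode_lessThan: "set_encode {..<m} = 2^m - 1"
  unfolding set_encode_def by (simp add: lessThan_atLeast0 sum_power2)

lemma set_decode_sub: "v < 2^m \<Longrightarrow> set_decode v \<subseteq> {..<m}"
proof
  fix x assume v: "v < 2^m" and x: "x \<in> set_decode v"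
  show "x \<in> {..<m}"
  proof (rule ccontr)
    assume "x \<notin> {..<m}"
    then have "2^m \<le> (2::nat)^x" by simp
    then have "v < 2^x" using v by linarith
    then have "v div 2^x = 0" by simp
    then show False using x by (simp add: set_decode_def)
  qed
qed

lemma count_block:
  assumes "t \<le> 2^m"
  shows "card {Z\<in>Pow {(i-1)*m+1..(i-1)*m+m}. hfun m t Z i} = t"
proof -
  define o' where "o' = (i-1)*m"
  define B where "B = {o'+1..o'+m}"
  define D where "D Z = {j\<in>{..<m}. o' + (m-j) \<in> Z}" for Z
  define enc where "enc Z = set_encode (D Z)" for Z
  have encB: "Bin m Z i = enc Z" for Z unfolding Bin_enc enc_def D_def o'_def by simp
  have bij: "bij_betw enc (Pow B) {..<2^m}"
  proof (rule bij_betw_imageI)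
    show "inj_on enc (Pow B)"
    proof (rule inj_onI)
      fix Z Z' assume Z: "Z \<in> Pow B" "Z' \<in> Pow B" "enc Z = enc Z'"
      then have "D Z = D Z'" unfolding enc_def D_def by (simp add: set_encode_eq)
      show "Z = Z'"
      proof (rule set_eqI)
        fix x
        show "x \<in> Z \<longleftrightarrow> x \<in> Z'"
        proof (cases "x \<in> B")
          case True
          then have "x = o' + (m - (o'+m-x))" "o'+m-x < m" unfolding B_def by auto
          then have "x \<in> Z \<longleftrightarrow> o'+m-x \<in> D Z" "x \<in> Z' \<longleftrightarrow> o'+m-x \<in> D Z'" unfolding D_def by auto
          then show ?thesis using \<open>D Z = D Z'\<close> by simp
        next
          case False then show ?thesis using Z by auto
        qed
      qed
    qed
    show "enc ` Pow B = {..<2^m}"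
    proof
      show "enc ` Pow B \<subseteq> {..<2^m}"
      proof
        fix v assume "v \<in> enc ` Pow B"
        then obtain Z where "v = enc Z" by auto
        moreover have "D Z \<subseteq> {..<m}" unfolding D_def by auto
        ultimately have "v \<le> set_encode {..<m}" unfolding enc_def by (simp add: set_encode_le)
        moreover have "(0::nat) < 2^m" by simp
        ultimately have "v \<le> 2^m - 1" "(0::nat) < 2^m" by (simp_all add: set_encode_lessThan)
        then have "v < 2^m" by linarith
        then show "v \<in> {..<2^m}" by simp
      qed
      show "{..<2^m} \<subseteq> enc ` Pow B"
      proof
        fix v assume "v \<in> {..<(2::nat)^m}"
        then have E: "set_decode v \<subseteq> {..<m}" by (intro set_decode_sub) auto
        define Z where "Z = (\<lambda>j. o'+(m-j)) ` set_decode v"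
        have "Z \<subseteq> B" unfolding Z_def B_def using E by auto
        have "D Z = set_decode v"
        proof
          show "D Z \<subseteq> set_decode v"
          proof
            fix j assume "j \<in> D Z"
            then obtain j' where "j < m" "j' \<in> set_decode v" "o'+(m-j) = o'+(m-j')"
              unfolding D_def Z_def by auto
            moreover have "j' < m" using E \<open>j' \<in> set_decode v\<close> by auto
            ultimately show "j \<in> set_decode v" by (metis add_left_cancel diff_diff_cancel less_imp_le)
          qed
          show "set_decode v \<subseteq> D Z" unfolding D_def Z_def using E by auto
        qed
        then have "v = enc Z" unfolding enc_def by simp
        then show "v \<in> enc ` Pow B" using \<open>Z \<subseteq> B\<close> by auto
      qed
    qed
  qed
  have "{Z\<in>Pow B. hfun m t Z i} = {Z\<in>Pow B. 2^m - t \<le> enc Z}"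
    unfolding hfun_def encB by simp
  moreover have "card {Z\<in>Pow B. 2^m - t \<le> enc Z} = card {v\<in>{..<2^m}. 2^m - t \<le> v}"
  proof -
    have inj: "inj_on enc {Z\<in>Pow B. 2^m - t \<le> enc Z}"
      using bij unfolding bij_betw_def by (auto intro: inj_on_subset)
    have "enc ` {Z\<in>Pow B. 2^m - t \<le> enc Z} = {v\<in>{..<2^m}. 2^m - t \<le> v}"
      using bij unfolding bij_betw_def by auto
    then show ?thesis using card_image[OF inj] by simp
  qed
  moreover have "{v\<in>{..<(2::nat)^m}. 2^m - t \<le> v} = {2^m-t..<2^m}" by auto
  ultimately show ?thesis using assms unfolding B_def o'_def by simp
qed

lemma top_bit:
  assumes "hfun m t Z i" "1 \<le> j" "j \<le> m" "t * 2^j \<le> 2^m"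
  shows "(i-1)*m + j \<in> Z"
proof (rule ccontr)
  assume nz: "(i-1)*m + j \<notin> Z"
  define A where "A = {ja\<in>{..<m}. (i-1)*m + (m-ja) \<in> Z}"
  have "m - j \<notin> A" using nz assms(3) unfolding A_def by auto
  then have sub: "A \<subseteq> {..<m} - {m-j}" unfolding A_def by auto
  have "set_encode A \<le> set_encode ({..<m} - {m-j})"
    unfolding set_encode_def by (rule sum_mono2[OF _ sub]) auto
  also have "\<dots> = set_encode {..<m} - 2^(m-j)"
    unfolding set_encode_def using assms by (subst sum_diff1_nat) auto
  also have "\<dots> = 2^m - 1 - 2^(m-j)" by (simp add: set_encode_lessThan)
  finally have le: "Bin m Z i \<le> 2^m - 1 - 2^(m-j)" unfolding Bin_enc A_def .
  have "t * 2^j \<le> 2^(m-j) * 2^j" using assms by (simp add: power_add[symmetric])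
  then have "t \<le> 2^(m-j)" by simp
  moreover have "2^(m-j) < (2::nat)^m" using assms by (intro power_strict_increasing) auto
  ultimately have "Bin m Z i < 2^m - t" using le by linarith
  then show False using assms(1) unfolding hfun_def by simp
qed

lemma sum_sign_zero:
  assumes "finite B" "q \<in> B"
  shows "(\<Sum>Z\<in>Pow B. (if q \<in> Z then -1 else 1 :: real)) = 0"
proof -
  define B' where "B' = B - {q}"
  have B: "B = insert q B'" "q \<notin> B'" "finite B'" using assms unfolding B'_def by auto
  have disj: "Pow B' \<inter> insert q ` Pow B' = {}" using B by auto
  have inj: "inj_on (insert q) (Pow B')" using B by (auto intro!: inj_onI)
  have "(\<Sum>Z\<in>Pow B. (if q \<in> Z then -1 else 1 :: real))
     = (\<Sum>Z\<in>Pow B'. (if q \<in> Z then -1 else 1 :: real)) + (\<Sum>Z\<in>insert q ` Pow B'. (if q \<in> Z then -1 else 1 :: real))"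
    unfolding B(1) Pow_insert by (rule sum.union_disjoint) (use B disj in auto)
  also have "(\<Sum>Z\<in>insert q ` Pow B'. (if q \<in> Z then -1 else 1 :: real)) = (\<Sum>Z\<in>Pow B'. -1)"
    by (subst sum.reindex[OF inj]) auto
  also have "(\<Sum>Z\<in>Pow B'. (if q \<in> Z then -1 else 1 :: real)) = (\<Sum>Z\<in>Pow B'. 1)"
    using B by (intro sum.cong) auto
  finally show ?thesis by simp
qed




lemma sum_indicator_card: "finite A \<Longrightarrow> (\<Sum>Z\<in>A. (if P Z then 1 else 0 :: real)) = real (card {Z\<in>A. P Z})"
  by (simp add: sum.inter_filter[symmetric])

lemma card_Pow_block: "card (Pow {(i-1)*m+1..(i-1)*m+(m::nat)}) = 2^m"
  by (simp add: card_Pow)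

lemma block_sum_empty:
  assumes "t \<le> 2^m" "T \<inter> {(i-1)*m+1..(i-1)*m+m} = {}"
  shows "(\<Sum>Z\<in>Pow {(i-1)*m+1..(i-1)*m+m}. (1/2)^m * (if (hfun m t Z i \<longleftrightarrow> x) then 1 else 0) * (-1::real)^card(T \<inter> Z))
    = (if x then real t / 2^m else 1 - real t / 2^m)"
proof -
  define B where "B = {(i-1)*m+1..(i-1)*m+m}"
  have fin: "finite B" unfolding B_def by simp
  have "(\<Sum>Z\<in>Pow B. (1/2)^m * (if (hfun m t Z i \<longleftrightarrow> x) then 1 else 0) * (-1::real)^card(T \<inter> Z))
     = (1/2)^m * (\<Sum>Z\<in>Pow B. (if (hfun m t Z i \<longleftrightarrow> x) then 1 else 0))"
  proof -
    have "T \<inter> Z = {}" if "Z \<in> Pow B" for Z using that assms(2) unfolding B_def by auto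
    then show ?thesis by (simp add: sum_distrib_left)
  qed
  also have "\<dots> = (1/2)^m * real (card {Z\<in>Pow B. hfun m t Z i \<longleftrightarrow> x})"
    using fin by (simp add: sum_indicator_card)
  also have "\<dots> = (if x then real t / 2^m else 1 - real t / 2^m)"
  proof (cases x)
    case True
    then show ?thesis using count_block[OF assms(1), of i] unfolding B_def by (simp add: field_simps)
  next
    case False
    have "{Z\<in>Pow B. \<not> hfun m t Z i} = Pow B - {Z\<in>Pow B. hfun m t Z i}" by auto
    moreover have "card (Pow B - {Z\<in>Pow B. hfun m t Z i}) = card (Pow B) - card {Z\<in>Pow B. hfun m t Z i}"
      by (rule card_Diff_subset) (use fin in auto)
    ultimately have "card {Z\<in>Pow B. \<not> hfun m t Z i} = 2^m - t"
      using count_block[OF assms(1), of i] card_Pow_block[of i m] unfolding B_def by simp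
    then show ?thesis using False assms(1) by (simp add: field_simps of_nat_diff)
  qed
  finally show ?thesis unfolding B_def .
qed

lemma block_sum_single:
  assumes "t \<le> 2^m" "T \<inter> {(i-1)*m+1..(i-1)*m+m} = {(i-1)*m+j}" "1 \<le> j" "j \<le> m" "t * 2^j \<le> 2^m"
  shows "(\<Sum>Z\<in>Pow {(i-1)*m+1..(i-1)*m+m}. (1/2)^m * (if (hfun m t Z i \<longleftrightarrow> x) then 1 else 0) * (-1::real)^card(T \<inter> Z))
    = (if x then - (real t / 2^m) else real t / 2^m)"
proof -
  define B where "B = {(i-1)*m+1..(i-1)*m+m}"
  define q where "q = (i-1)*m+j"
  have fin: "finite B" unfolding B_def by simp
  have qB: "q \<in> B" unfolding B_def q_def using assms by auto
  have sg: "(-1::real)^card(T \<inter> Z) = (if q \<in> Z then -1 else 1)" if "Z \<in> Pow B" for Z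
  proof -
    have "T \<inter> Z = T \<inter> B \<inter> Z" using that by auto
    also have "\<dots> = {q} \<inter> Z" using assms(2) unfolding B_def q_def by simp
    finally show ?thesis by auto
  qed
  have hq: "hfun m t Z i \<Longrightarrow> q \<in> Z" for Z using top_bit[OF _ assms(3,4,5)] unfolding q_def by blast
  have S0: "(\<Sum>Z\<in>Pow B. (if q \<in> Z then -1 else 1 :: real)) = 0" by (rule sum_sign_zero[OF fin qB])
  have H: "(\<Sum>Z\<in>Pow B. (if hfun m t Z i then 1 else 0) * (if q \<in> Z then -1 else 1 :: real))
        = - real t"
  proof -
    have "(\<Sum>Z\<in>Pow B. (if hfun m t Z i then 1 else 0) * (if q \<in> Z then -1 else 1 :: real))
         = (\<Sum>Z\<in>Pow B. - (if hfun m t Z i then 1 else 0))"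
      by (rule sum.cong) (auto dest: hq)
    also have "\<dots> = - real t" using count_block[OF assms(1), of i] fin
      by (simp add: sum_negf sum_indicator_card B_def)
    finally show ?thesis .
  qed
  have "(\<Sum>Z\<in>Pow B. (1/2)^m * (if (hfun m t Z i \<longleftrightarrow> x) then 1 else 0) * (-1::real)^card(T \<inter> Z))
      = (1/2)^m * (\<Sum>Z\<in>Pow B. (if (hfun m t Z i \<longleftrightarrow> x) then 1 else 0) * (if q \<in> Z then -1 else 1 :: real))"
    unfolding sum_distrib_left by (intro sum.cong refl) (simp add: sg)
  also have "\<dots> = (if x then - (real t / 2^m) else real t / 2^m)"
  proof (cases x)
    case True
    then show ?thesis using H by (simp add: field_simps)
  next
    case False
    have "(\<Sum>Z\<in>Pow B. (if (hfun m t Z i \<longleftrightarrow> x) then 1 else 0) * (if q \<in> Z then -1 else 1 :: real))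
       = (\<Sum>Z\<in>Pow B. (if q \<in> Z then -1 else 1 :: real) - (if hfun m t Z i then 1 else 0) * (if q \<in> Z then -1 else 1 :: real))"
      using False by (intro sum.cong) auto
    also have "\<dots> = real t" using S0 H by (simp add: sum_subtractf)
    finally show ?thesis using False by (simp add: field_simps)
  qed
  finally show ?thesis unfolding B_def .
qed




lemma blk_div:
  assumes "1 \<le> (m::nat)" "x \<in> {(i-1)*m+1..(i-1)*m+m}"
  shows "(x-1) div m = i-1"
proof -
  have e: "x - 1 = (x - 1 - (i-1)*m) + (i-1)*m" "x - 1 - (i-1)*m < m" using assms by auto
  have "(x-1) div m = ((x - 1 - (i-1)*m) + (i-1)*m) div m" using e(1) by simp
  also have "\<dots> = (x - 1 - (i-1)*m) div m + (i-1)" using assms(1) by simp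
  also have "\<dots> = i - 1" using e(2) by simp
  finally show ?thesis .
qed

lemma blocks_Union:
  assumes "1 \<le> (m::nat)"
  shows "(\<Union>i\<in>{1..n}. {(i-1)*m+1..(i-1)*m+m}) = {1..m*n}"
proof
  show "(\<Union>i\<in>{1..n}. {(i-1)*m+1..(i-1)*m+m}) \<subseteq> {1..m*n}"
  proof
    fix x assume "x \<in> (\<Union>i\<in>{1..n}. {(i-1)*m+1..(i-1)*m+m})"
    then obtain i where i: "1 \<le> i" "i \<le> n" "(i-1)*m+1 \<le> x" "x \<le> (i-1)*m+m" by auto
    have "(i-1)*m+m = i*m" using i(1) by (cases i) auto
    also have "\<dots> \<le> n*m" using i(2) by simp
    finally show "x \<in> {1..m*n}" using i by (simp add: mult.commute)
  qed
  show "{1..m*n} \<subseteq> (\<Union>i\<in>{1..n}. {(i-1)*m+1..(i-1)*m+m})"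
  proof
    fix x assume x: "x \<in> {1..m*n}"
    define q where "q = (x-1) div m"
    have a: "q * m \<le> x - 1" unfolding q_def by (simp add: div_times_less_eq_dividend)
    have b: "x - 1 < q * m + m" unfolding q_def using assms
      by (metis add.commute div_mult_mod_eq mod_less_divisor nat_add_left_cancel_less not_one_le_zero not_gr_zero)
    have c: "q < n" unfolding q_def using x assms
      by (metis atLeastAtMost_iff diff_less less_le_trans less_mult_imp_div_less mult.commute zero_less_one le_numeral_extra(1) order_less_le_trans less_one not_le)
    show "x \<in> (\<Union>i\<in>{1..n}. {(i-1)*m+1..(i-1)*m+m})"
      using a b c x by (intro UN_I[of "q+1"]) auto
  qed
qed

lemma blocks_disj:
  assumes "1 \<le> (m::nat)" "1 \<le> i" "1 \<le> i'" "i \<noteq> i'"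
  shows "{(i-1)*m+1..(i-1)*m+m} \<inter> {(i'-1)*m+1..(i'-1)*m+m} = {}"
  using blk_div[OF assms(1), of _ i] blk_div[OF assms(1), of _ i'] assms by fastforce




lemma key_lemma:
  fixes f :: "nat set \<Rightarrow> real"
  assumes m: "1 \<le> m" and tm: "t \<le> 2^m" and p: "p = real t / 2^m" and p0: "0 < p" and p1: "p < 1"
    and S: "S \<subseteq> {1..n}" and J: "\<And>i. i\<in>S \<Longrightarrow> 1 \<le> J i \<and> J i \<le> m \<and> t * 2^(J i) \<le> 2^m"
  shows "fcoef (m*n) (1/2) (Red n m t f) ((\<lambda>i. (i-1)*m + J i) ` S) = sqrt (p/(1-p)) ^ card S * fcoef n p f S"
proof -
  define B where "B i = {(i-1)*m+1..(i-1)*m+m}" for i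
  define T where "T = (\<lambda>i. (i-1)*m + J i) ` S"
  define H where "H Y = {i\<in>{1..n}. hfun m t Y i}" for Y
  define c where "c = sqrt (p/(1-p))"
  define \<rho> where "\<rho> X i = (if i\<in>S then (if i\<in>X then -p else p) else (if i\<in>X then p else 1-p))" for X i
  define \<psi> where "\<psi> X i Z = (1/2)^m * (if (hfun m t Z i \<longleftrightarrow> i\<in>X) then 1 else 0) * (-1::real)^card(T \<inter> Z)" for X i Z
  have U: "(\<Union>i\<in>{1..n}. B i) = {1..m*n}" unfolding B_def using blocks_Union[OF m] .
  have Dj: "B i \<inter> B i' = {}" if "i\<in>{1..n}" "i'\<in>{1..n}" "i\<noteq>i'" for i i'
    unfolding B_def using blocks_disj[OF m] that by auto
  have TB: "T \<inter> B i = (if i\<in>S then {(i-1)*m + J i} else {})" if "1 \<le> i" for i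
  proof -
    have "i' = i" if "i'\<in>S" "(i'-1)*m + J i' \<in> B i" for i'
    proof -
      have "1 \<le> i'" using S that by auto
      have "((i'-1)*m + J i' - 1) div m = i' - 1"
        using J[OF that(1)] by (intro blk_div[OF m]) auto
      moreover have "((i'-1)*m + J i' - 1) div m = i - 1" using blk_div[OF m] that(2) unfolding B_def by blast
      ultimately show ?thesis using \<open>1 \<le> i'\<close> \<open>1 \<le> i\<close> by simp
    qed
    moreover have "(i-1)*m + J i \<in> B i" if "i \<in> S" using J[OF that] unfolding B_def by auto
    ultimately show ?thesis unfolding T_def by auto
  qed
  have TS: "T \<subseteq> {1..m*n}" unfolding U[symmetric] T_def
  proof
    fix x assume "x \<in> (\<lambda>i. (i-1)*m + J i) ` S"
    then obtain i where "i \<in> S" "x = (i-1)*m + J i" by auto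
    then show "x \<in> (\<Union>i\<in>{1..n}. B i)" using J[of i] S unfolding B_def by (intro UN_I[of i]) auto
  qed
  have blockval: "(\<Sum>Z\<in>Pow (B i). \<psi> X i Z) = \<rho> X i" if "i \<in> {1..n}" for X i
  proof (cases "i \<in> S")
    case True
    have "T \<inter> B i = {(i-1)*m + J i}" using TB[of i] that True by simp
    then show ?thesis unfolding \<psi>_def \<rho>_def B_def using block_sum_single[OF tm _ _ _ , of T i "J i" "i\<in>X"] J[OF True] True p
      by simp
  next
    case False
    have "T \<inter> B i = {}" using TB[of i] that False by simp
    then show ?thesis unfolding \<psi>_def \<rho>_def B_def using block_sum_empty[OF tm, of T i "i\<in>X"] False p
      by simp
  qed
  have fact: "(if H Y = X then (1/2)^(m*n) * (-1::real)^card(T \<inter> Y) else 0) = (\<Prod>i\<in>{1..n}. \<psi> X i (Y \<inter> B i))"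
    if X: "X \<subseteq> {1..n}" and Y: "Y \<subseteq> {1..m*n}" for X Y
  proof -
    have "(\<Prod>i\<in>{1..n}. \<psi> X i (Y \<inter> B i)) = (\<Prod>i\<in>{1..n}. (1/2::real)^m) *
      (\<Prod>i\<in>{1..n}. (if (hfun m t (Y \<inter> B i) i \<longleftrightarrow> i\<in>X) then 1 else 0 :: real)) *
      (\<Prod>i\<in>{1..n}. (-1::real)^card(T \<inter> (Y \<inter> B i)))"
      unfolding \<psi>_def by (simp add: prod.distrib)
    also have "(\<Prod>i\<in>{1..n}. (1/2::real)^m) = (1/2)^(m*n)" by (simp add: power_mult)
    also have "(\<Prod>i\<in>{1..n}. (if (hfun m t (Y \<inter> B i) i \<longleftrightarrow> i\<in>X) then 1 else 0 :: real)) = (if H Y = X then 1 else 0)"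
    proof -
      have hl: "hfun m t (Y \<inter> B i) i = hfun m t Y i" for i unfolding B_def using hfun_local[of m t Y i] by simp
      have "H Y = X \<longleftrightarrow> (\<forall>i\<in>{1..n}. hfun m t Y i \<longleftrightarrow> i\<in>X)" unfolding H_def using X by auto
      then show ?thesis by (auto simp: hl prod_zero_iff)
    qed
    also have "(\<Prod>i\<in>{1..n}. (-1::real)^card(T \<inter> (Y \<inter> B i))) = (-1)^card(T \<inter> Y)"
    proof -
      have "T \<inter> Y = (\<Union>i\<in>{1..n}. T \<inter> (Y \<inter> B i))" using Y U by auto
      moreover have "card (\<Union>i\<in>{1..n}. T \<inter> (Y \<inter> B i)) = (\<Sum>i\<in>{1..n}. card (T \<inter> (Y \<inter> B i)))"
      proof (rule card_UN_disjoint)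
        show "\<forall>i\<in>{1..n}. \<forall>j\<in>{1..n}. i \<noteq> j \<longrightarrow> T \<inter> (Y \<inter> B i) \<inter> (T \<inter> (Y \<inter> B j)) = {}"
          using Dj by blast
      qed (auto simp: B_def)
      ultimately have "card (T \<inter> Y) = (\<Sum>i\<in>{1..n}. card (T \<inter> (Y \<inter> B i)))" by simp
      then show ?thesis by (simp add: power_sum)
    qed
    finally show ?thesis by simp
  qed
  have inner: "(\<Sum>Y\<in>Pow {1..m*n}. if H Y = X then (1/2)^(m*n) * (-1::real)^card(T \<inter> Y) else 0)
      = (\<Prod>i\<in>{1..n}. \<rho> X i)" if X: "X \<subseteq> {1..n}" for X
  proof -
    have "(\<Sum>Y\<in>Pow {1..m*n}. if H Y = X then (1/2)^(m*n) * (-1::real)^card(T \<inter> Y) else 0)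
        = (\<Sum>Y\<in>Pow (\<Union>i\<in>{1..n}. B i). \<Prod>i\<in>{1..n}. \<psi> X i (Y \<inter> B i))"
      unfolding U by (intro sum.cong refl) (use fact X in auto)
    also have "\<dots> = (\<Prod>i\<in>{1..n}. \<Sum>Z\<in>Pow (B i). \<psi> X i Z)"
      by (rule sum_Pow_prod_blocks) (use Dj in \<open>auto simp: B_def\<close>)
    also have "\<dots> = (\<Prod>i\<in>{1..n}. \<rho> X i)" by (intro prod.cong refl blockval)
    finally show ?thesis .
  qed
  have alg: "(\<Prod>i\<in>{1..n}. \<rho> X i) = c ^ card S * (mu n p X * u p S X)" if X: "X \<subseteq> {1..n}" for X
  proof -
    have r: "\<rho> X i = (if i\<in>X then p else 1-p) * (if i\<in>S then (if i\<in>X then -1 else p/(1-p)) else 1)" for i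
      unfolding \<rho>_def using p1 by auto
    have P1: "(\<Prod>i\<in>{1..n}. (if i\<in>X then p else 1-p)) = mu n p X"
    proof -
      have "(\<Prod>i\<in>{1..n}. (if i\<in>X then p else 1-p)) = p ^ card ({1..n} \<inter> X) * (1-p) ^ card ({1..n} - X)"
        by (simp add: prod.If_cases Diff_eq)
      also have "{1..n} \<inter> X = X" using X by auto
      also have "card ({1..n} - X) = n - card X" using X by (simp add: card_Diff_subset finite_subset)
      finally show ?thesis unfolding mu_def .
    qed
    have fS: "finite S" using S finite_subset by blast
    have P2: "(\<Prod>i\<in>{1..n}. (if i\<in>S then (if i\<in>X then -1 else p/(1-p)) else 1)) = (-1)^card (S \<inter> X) * (p/(1-p))^card (S - X)"
    proof -
      have "(\<Prod>i\<in>{1..n}. (if i\<in>S then (if i\<in>X then -1 else p/(1-p)) else 1)) = (\<Prod>i\<in>S. (if i\<in>X then -1 else p/(1-p)))"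
        using S by (simp add: prod.If_cases Int_absorb1 Diff_eq[symmetric])
      also have "\<dots> = (-1)^card (S \<inter> X) * (p/(1-p))^card (S - X)"
        using fS by (simp add: prod.If_cases Diff_eq)
      finally show ?thesis .
    qed
    have ac: "sqrt ((1-p)/p) * c = 1" unfolding c_def using p0 p1
      by (simp add: real_sqrt_mult[symmetric])
    have cc: "c * c = p/(1-p)" unfolding c_def using p0 p1 by simp
    have cS: "card S = card (S \<inter> X) + card (S - X)"
    proof -
      have "S = (S \<inter> X) \<union> (S - X)" by auto
      then have "card S = card ((S \<inter> X) \<union> (S - X))" by simp
      also have "\<dots> = card (S \<inter> X) + card (S - X)" by (rule card_Un_disjoint) (use fS in auto)
      finally show ?thesis .
    qed
    have gen: "x^(a+b) * (y^a * z^b) = (y*x)^a * (z*x)^b" for x y z :: real and a b :: nat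
      by (simp add: power_add power_mult_distrib ac_simps)
    have "c ^ card S * u p S X = ((- sqrt ((1-p)/p)) * c) ^ card (S \<inter> X) * (sqrt (p/(1-p)) * c) ^ card (S - X)"
      unfolding u_def cS by (rule gen)
    also have "\<dots> = (-1)^card (S \<inter> X) * (p/(1-p))^card (S - X)"
      using ac cc unfolding c_def by simp
    finally have "c ^ card S * u p S X = (-1)^card (S \<inter> X) * (p/(1-p))^card (S - X)" .
    then show ?thesis unfolding r prod.distrib P1 P2 by simp
  qed
  have hf: "mu (m*n) (1/2) Y = (1/2)^(m*n)" if "Y \<subseteq> {1..m*n}" for Y
  proof -
    have "card Y \<le> m*n" using card_mono[OF _ that] by simp
    then have "card Y + (m*n - card Y) = m*n" by simp
    moreover have "(1::real) - 1/2 = 1/2" by simp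
    ultimately show ?thesis unfolding mu_def by (metis power_add)
  qed
  have hu: "u (1/2) T Y = (-1)^card (T \<inter> Y)" for Y unfolding u_def by simp
  have "fcoef (m*n) (1/2) (Red n m t f) T = (\<Sum>Y\<in>Pow {1..m*n}. (1/2)^(m*n) * f (H Y) * (-1)^card(T \<inter> Y))"
    unfolding fcoef_def Red_def H_def[symmetric] hu by (intro sum.cong refl) (auto simp: hf)
  also have "\<dots> = (\<Sum>Y\<in>Pow {1..m*n}. \<Sum>X\<in>Pow {1..n}. f X * (if H Y = X then (1/2)^(m*n) * (-1)^card(T \<inter> Y) else 0))"
  proof (intro sum.cong refl)
    fix Y
    have "H Y \<in> Pow {1..n}" unfolding H_def by auto
    then have "(\<Sum>X\<in>Pow {1..n}. f X * (if H Y = X then (1/2)^(m*n) * (-1)^card(T \<inter> Y) else 0))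
      = (\<Sum>X\<in>Pow {1..n}. (if H Y = X then f X * ((1/2)^(m*n) * (-1)^card(T \<inter> Y)) else 0))"
      by (intro sum.cong refl) auto
    also have "\<dots> = f (H Y) * ((1/2)^(m*n) * (-1)^card(T \<inter> Y))"
      using \<open>H Y \<in> Pow {1..n}\<close> by (subst sum.delta') auto
    finally show "(1/2)^(m*n) * f (H Y) * (-1)^card(T \<inter> Y) = (\<Sum>X\<in>Pow {1..n}. f X * (if H Y = X then (1/2)^(m*n) * (-1)^card(T \<inter> Y) else 0))"
      by simp
  qed
  also have "\<dots> = (\<Sum>X\<in>Pow {1..n}. f X * (\<Sum>Y\<in>Pow {1..m*n}. (if H Y = X then (1/2)^(m*n) * (-1)^card(T \<inter> Y) else 0)))"
    by (subst sum.swap) (simp add: sum_distrib_left)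
  also have "\<dots> = (\<Sum>X\<in>Pow {1..n}. f X * (c ^ card S * (mu n p X * u p S X)))"
  proof (intro sum.cong refl)
    fix X assume "X \<in> Pow {1..n}"
    then have X: "X \<subseteq> {1..n}" by simp
    show "f X * (\<Sum>Y\<in>Pow {1..m*n}. (if H Y = X then (1/2)^(m*n) * (-1)^card(T \<inter> Y) else 0)) = f X * (c ^ card S * (mu n p X * u p S X))"
      by (simp only: inner[OF X] alg[OF X])
  qed
  also have "\<dots> = c ^ card S * fcoef n p f S"
    unfolding fcoef_def sum_distrib_left by (intro sum.cong refl) (simp add: ac_simps)
  finally show ?thesis unfolding T_def c_def .
qed




lemma params:
  assumes m: "m \<ge> 1" and t1: "1 \<le> t" and t2: "t \<le> 2 ^ (m - 1)" and p: "p = real t / 2 ^ m"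
  shows "0 < p" "p < 1" "t \<le> 2^m" "0 \<le> \<lfloor>log 2 (1 / p)\<rfloor>" "nat \<lfloor>log 2 (1 / p)\<rfloor> \<le> m"
    "\<And>j. j \<le> nat \<lfloor>log 2 (1 / p)\<rfloor> \<Longrightarrow> t * 2^j \<le> 2^m"
proof -
  have "(2::nat)^(m-1) \<le> 2^m" by (intro power_increasing) auto
  then show tm: "t \<le> 2^m" using t2 by linarith
  have "(2::nat)^m = 2 * 2^(m-1)" using m by (cases m) auto
  then have "real t * 2 \<le> 2^m" using t2 by (metis of_nat_le_iff of_nat_mult of_nat_numeral of_nat_power mult.commute mult_le_mono2)
  show p0: "0 < p" using p t1 by simp
  have ip: "1/p = 2^m / real t" using p t1 by simp
  have ip1: "1/p \<ge> 2" using \<open>real t * 2 \<le> 2^m\<close> t1 unfolding ip by (simp add: field_simps)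
  then show p1: "p < 1" using p0 by (simp add: field_simps)
  have "0 \<le> log 2 (1/p)" using ip1 p0 p1 by (subst le_log_iff) auto
  then show fl0: "0 \<le> \<lfloor>log 2 (1 / p)\<rfloor>" by simp
  have "1/p \<le> 2^m" unfolding ip using t1 by (simp add: field_simps)
  then have "log 2 (1/p) \<le> real m" using p0 by (subst log_le_iff) (auto simp: powr_realpow)
  then have "\<lfloor>log 2 (1 / p)\<rfloor> \<le> int m" by linarith
  then show "nat \<lfloor>log 2 (1 / p)\<rfloor> \<le> m" by simp
  fix j assume j: "j \<le> nat \<lfloor>log 2 (1 / p)\<rfloor>"
  then have "int j \<le> \<lfloor>log 2 (1 / p)\<rfloor>" using fl0 by linarith
  then have "real_of_int (int j) \<le> log 2 (1/p)" by (simp add: le_floor_iff)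
  then have "real j \<le> log 2 (1/p)" by simp
  then have "2 powr real j \<le> 1/p" using p0 by (subst (asm) le_log_iff) auto
  then have "(2::real)^j \<le> 2^m / real t" unfolding ip by (simp add: powr_realpow)
  then have "real t * 2^j \<le> 2^m" using t1 by (simp add: field_simps)
  then have "real (t * 2^j) \<le> real (2^m)" by simp
  then show "t * 2^j \<le> 2^m" by (simp only: of_nat_le_iff)
qed




theorem theorem1p2:
  fixes m t n d :: nat and p :: real and f :: "nat set \<Rightarrow> real"
  assumes "m \<ge> 1" and "1 \<le> t" and "t \<le> 2 ^ (m - 1)"
    and "p = real t / 2 ^ m"
    and "1 \<le> d" and "d \<le> n"
  shows "(\<Sum>S\<in>{S. S \<subseteq> {1..m*n} \<and> card S = d}. (fcoef (m*n) (1/2) (Red n m t f) S)\<^sup>2)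
         \<ge> (p * of_int \<lfloor>log 2 (1 / p)\<rfloor> / (1 - p)) ^ d
           * (\<Sum>S\<in>{S. S \<subseteq> {1..n} \<and> card S = d}. (fcoef n p f S)\<^sup>2)"
proof -
  note P = params[OF assms(1-4)]
  define k where "k = nat \<lfloor>log 2 (1 / p)\<rfloor>"
  have kr: "of_int \<lfloor>log 2 (1 / p)\<rfloor> = real k" unfolding k_def using P(4) by simp
  have km: "k \<le> m" unfolding k_def using P(5) .
  have kt: "\<And>j. j \<le> k \<Longrightarrow> t * 2^j \<le> 2^m" unfolding k_def using P(6) .
  define g where "g = Red n m t f"
  define c where "c = sqrt (p/(1-p))"
  define SS where "SS = {S. S \<subseteq> {1..n} \<and> card S = d}"
  define TT where "TT = {S. S \<subseteq> {1..m*n} \<and> card S = d}"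
  define I where "I = Sigma SS (\<lambda>S. PiE S (\<lambda>_. {1..k}))"
  define \<Phi> where "\<Phi> z = (\<lambda>i. (i-1)*m + snd z i) ` fst z" for z :: "nat set \<times> (nat \<Rightarrow> nat)"
  have m1: "1 \<le> m" using assms(1) .
  have Jprop: "1 \<le> J i \<and> J i \<le> m \<and> t * 2^(J i) \<le> 2^m" if "J \<in> PiE S (\<lambda>_. {1..k})" "i \<in> S" for S J i
    using PiE_mem[OF that] km kt by auto
  have divf: "((i-1)*m + j - 1) div m = i - 1" if "1 \<le> j" "j \<le> m" for i j
    using that by (intro blk_div[OF m1]) auto
  have key: "fcoef (m*n) (1/2) g (\<Phi> z) = c ^ d * fcoef n p f (fst z)" if "z \<in> I" for z
  proof -
    obtain S J where z: "z = (S,J)" "S \<in> SS" "J \<in> PiE S (\<lambda>_. {1..k})" using \<open>z \<in> I\<close> unfolding I_def by auto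
    have "fcoef (m*n) (1/2) g (\<Phi> z) = c ^ card S * fcoef n p f S"
      unfolding g_def c_def \<Phi>_def z(1) fst_conv snd_conv
      by (rule key_lemma[OF m1 P(3) assms(4) P(1) P(2)]) (use z Jprop[OF z(3)] SS_def in auto)
    then show ?thesis using z SS_def by simp
  qed
  have injS: "inj_on (\<lambda>i. (i-1)*m + J i) S" if "S \<in> SS" "J \<in> PiE S (\<lambda>_. {1..k})" for S J
  proof (rule inj_onI)
    fix i i' assume h: "i \<in> S" "i' \<in> S" "(i-1)*m + J i = (i'-1)*m + J i'"
    have "i - 1 = i' - 1" using divf[of "J i" i] divf[of "J i'" i'] Jprop[OF that(2)] h by metis
    moreover have "1 \<le> i" "1 \<le> i'" using h that SS_def by auto
    ultimately show "i = i'" by simp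
  qed
  have PhiTT: "\<Phi> z \<in> TT" if "z \<in> I" for z
  proof -
    obtain S J where z: "z = (S,J)" "S \<in> SS" "J \<in> PiE S (\<lambda>_. {1..k})" using \<open>z \<in> I\<close> unfolding I_def by auto
    have "\<Phi> z \<subseteq> {1..m*n}"
    proof
      fix x assume "x \<in> \<Phi> z"
      then obtain i where i: "i \<in> S" "x = (i-1)*m + J i" unfolding \<Phi>_def z(1) by auto
      have "x \<in> (\<Union>i\<in>{1..n}. {(i-1)*m+1..(i-1)*m+m})" using i Jprop[OF z(3) i(1)] z(2) SS_def
        by (intro UN_I[of i]) auto
      then show "x \<in> {1..m*n}" unfolding blocks_Union[OF m1] .
    qed
    moreover have "card (\<Phi> z) = d" unfolding \<Phi>_def z(1) using card_image[OF injS[OF z(2,3)]] z(2) SS_def by simp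
    ultimately show ?thesis unfolding TT_def by simp
  qed
  have injPhi: "inj_on \<Phi> I"
  proof (rule inj_onI)
    fix z z' assume zI: "z \<in> I" "z' \<in> I" and e: "\<Phi> z = \<Phi> z'"
    obtain S J where z: "z = (S,J)" "S \<in> SS" "J \<in> PiE S (\<lambda>_. {1..k})" using zI unfolding I_def by auto
    obtain S' J' where z': "z' = (S',J')" "S' \<in> SS" "J' \<in> PiE S' (\<lambda>_. {1..k})" using zI unfolding I_def by auto
    have e': "(\<lambda>i. (i-1)*m + J i) ` S = (\<lambda>i. (i-1)*m + J' i) ` S'" using e unfolding \<Phi>_def z(1) z'(1) by simp
    have bk: "(\<lambda>x. (x-1) div m + 1) ` ((\<lambda>i. (i-1)*m + K i) ` A) = A"
      if "A \<in> SS" "K \<in> PiE A (\<lambda>_. {1..k})" for A K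
    proof -
      have "((i-1)*m + K i - 1) div m + 1 = i" if "i \<in> A" for i
        using divf[of "K i" i] Jprop[OF \<open>K \<in> _\<close> that] \<open>A \<in> SS\<close> that SS_def by auto
      then show ?thesis by (force simp: image_image)
    qed
    have SS': "S = S'" using bk[OF z(2,3)] bk[OF z'(2,3)] e' by metis
    have "J i = J' i" if "i \<in> S" for i
    proof -
      have "(i-1)*m + J i \<in> (\<lambda>i. (i-1)*m + J' i) ` S'" using e' that by blast
      then obtain i' where i': "i' \<in> S'" "(i-1)*m + J i = (i'-1)*m + J' i'" by auto
      have "i - 1 = i' - 1" using divf[of "J i" i] divf[of "J' i'" i'] Jprop[OF z(3) that] Jprop[OF z'(3) i'(1)] i'(2) by metis
      moreover have "1 \<le> i" "1 \<le> i'" using that i'(1) z(2) z'(2) SS_def by auto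
      ultimately have "i = i'" by simp
      then show ?thesis using i'(2) by simp
    qed
    then have "J = J'" using z(3) z'(3) SS' by (intro PiE_ext) auto
    then show "z = z'" using z z' SS' by simp
  qed
  have finTT: "finite TT" unfolding TT_def by (rule finite_subset[of _ "Pow {1..m*n}"]) auto
  have finSS: "finite SS" unfolding SS_def by (rule finite_subset[of _ "Pow {1..n}"]) auto
  have "(\<Sum>T\<in>TT. (fcoef (m*n) (1/2) g T)\<^sup>2) \<ge> (\<Sum>T\<in>\<Phi> ` I. (fcoef (m*n) (1/2) g T)\<^sup>2)"
    by (rule sum_mono2[OF finTT]) (use PhiTT in auto)
  moreover have "(\<Sum>T\<in>\<Phi> ` I. (fcoef (m*n) (1/2) g T)\<^sup>2) = (\<Sum>z\<in>I. (fcoef (m*n) (1/2) g (\<Phi> z))\<^sup>2)"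
    by (rule sum.reindex_cong[OF injPhi refl refl])
  moreover have "\<dots> = (\<Sum>z\<in>I. (c^d * fcoef n p f (fst z))\<^sup>2)"
    by (intro sum.cong refl) (simp add: key)
  moreover have "\<dots> = (\<Sum>S\<in>SS. \<Sum>J\<in>PiE S (\<lambda>_. {1..k}). (c^d * fcoef n p f S)\<^sup>2)"
  proof -
    have finPi: "\<forall>S\<in>SS. finite (PiE S (\<lambda>_. {1..k}))"
      unfolding SS_def by (auto intro!: finite_PiE intro: finite_subset)
    show ?thesis unfolding I_def sum.Sigma[OF finSS finPi] by (simp add: split_beta)
  qed
  moreover have "\<dots> = (\<Sum>S\<in>SS. real k ^ d * (c^d * fcoef n p f S)\<^sup>2)"
  proof (intro sum.cong refl)
    fix S assume "S \<in> SS"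
    then have fS: "finite S" "card S = d" using SS_def finite_subset[of S "{1..n}"] by auto
    then have "card (PiE S (\<lambda>_. {1..k})) = k ^ d" by (simp add: card_PiE)
    then show "(\<Sum>J\<in>PiE S (\<lambda>_. {1..k}). (c^d * fcoef n p f S)\<^sup>2) = real k ^ d * (c^d * fcoef n p f S)\<^sup>2"
      by simp
  qed
  moreover have "\<dots> = (p * real k / (1 - p)) ^ d * (\<Sum>S\<in>SS. (fcoef n p f S)\<^sup>2)"
  proof -
    have cc: "c\<^sup>2 = p / (1-p)" unfolding c_def using P(1,2) by simp
    have "real k ^ d * (c^d * x)\<^sup>2 = (p * real k / (1 - p)) ^ d * x\<^sup>2" for x
    proof -
      have "real k ^ d * (c^d * x)\<^sup>2 = (real k * c\<^sup>2) ^ d * x\<^sup>2"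
      proof -
        have "(c^d)\<^sup>2 = (c\<^sup>2)^d" by (metis power_mult mult.commute)
        then show ?thesis by (simp only: power_mult_distrib mult.assoc)
      qed
      then show ?thesis unfolding cc by (simp add: ac_simps)
    qed
    then show ?thesis by (simp add: sum_distrib_left)
  qed
  ultimately show ?thesis unfolding g_def SS_def TT_def kr by simp
qed


end
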